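(* Let $S(x,y;t,v)=\sum_{w}x^{i(w)}y^{j(w)}t^{|w|}v^{\mathrm{vert}(w)}$, where the sum runs over all walks $w$ on the slit plane on the ordinary square lattice, $(i(w),j(w))$ is the endpoint, $|w|$ the length and $\mathrm{vert}(w)$ the number of vertical steps $(0,\pm1)$. Let $\delta_1=(1-2t(1+v))(1+2t(1-v))$ and $\delta_2=(1-2t(1-v))(1+2t(1+v))$. Then $$S(x,y;t,v)=\frac{\left(1-2t(v+\bar x)+\sqrt{\delta_1}\right)^{1/2}\left(1+2t(v-\bar x)+\sqrt{\delta_2}\right)^{1/2}}{2\left(1-t(x+\bar x+yv+\bar yv)\right)},$$ with radicals the power series in $t$ with positive constant term.
   Context: $\mathcal H=\{(k,0):k\le0\}$. A walk on the slit plane (ordinary square lattice) is a sequence $(w_0,\dots,w_n)$ in $\mathbb{Z}^2$ with $w_0=(0,0)$, $w_m-w_{m-1}\in\{(\pm1,0),(0,\pm1)\}$, and $w_m\notin\mathcal H$ for $1\le m\le n$. $\bar x=1/x$, $\bar y=1/y$. *)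

theory Defs
  imports Complex_Main "HOL-Computational_Algebra.Formal_Power_Series"
begin

definition sq_steps :: "(int \<times> int) set" where
  "sq_steps = {(1,0), (-1,0), (0,1), (0,-1)}"

definition slit :: "(int \<times> int) set" where
  "slit = {(k, 0) | k. k \<le> 0}"

definition walk_pos :: "(int \<times> int) list \<Rightarrow> nat \<Rightarrow> int \<times> int" where
  "walk_pos ws m = (sum_list (map fst (take m ws)), sum_list (map snd (take m ws)))"

definition slit_walk :: "(int \<times> int) list \<Rightarrow> bool" where
  "slit_walk ws \<longleftrightarrow> set ws \<subseteq> sq_steps \<and>
     (\<forall>m. 1 \<le> m \<and> m \<le> length ws \<longrightarrow> walk_pos ws m \<notin> slit)"

definition slit_walks :: "nat \<Rightarrow> (int \<times> int) list set" where
  "slit_walks n = {ws. length ws = n \<and> slit_walk ws}"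

definition vert :: "(int \<times> int) list \<Rightarrow> nat" where
  "vert ws = length (filter (\<lambda>s. fst s = 0) ws)"

definition S_gf :: "complex \<Rightarrow> complex \<Rightarrow> complex \<Rightarrow> complex fps" where
  "S_gf x y v = Abs_fps (\<lambda>n. \<Sum>ws\<in>slit_walks n.
      x powi fst (walk_pos ws n) * y powi snd (walk_pos ws n) * v ^ vert ws)"

text \<open>Square root of a power series, with constant term the principal square root
  (positive for positive real constant terms).\<close>
definition fps_sqrt :: "complex fps \<Rightarrow> complex fps" where
  "fps_sqrt a = fps_radical (\<lambda>_ z. csqrt z) 2 a"

end

theory Submission
  imports Defs "HOL-Analysis.Poly_Roots" "HOL-Computational_Algebra.Polynomial"
begin
unbundle fps_syntax


lemma sum_supp_eq:
  assumes "finite A" "finite B" "\<And>i. f i \<noteq> 0 \<Longrightarrow> i \<in> A \<inter> B"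
  shows "sum f A = sum f B"
proof -
  have "sum f A = sum f (A \<inter> B)"
    by (rule sum.mono_neutral_right) (use assms in auto)
  also have "\<dots> = sum f B"
    by (rule sum.mono_neutral_left) (use assms in auto)
  finally show ?thesis .
qed

lemma shift_sum:
  fixes c :: "int \<Rightarrow> complex"
  assumes supp: "\<And>i. c i \<noteq> 0 \<Longrightarrow> \<bar>i\<bar> \<le> M" and le: "M + \<bar>k\<bar> \<le> N" and x: "x \<noteq> 0"
  shows "(\<Sum>i\<in>{-N..N}. c (i+k) * x powi i) = x powi (-k) * (\<Sum>i\<in>{-M..M}. c i * x powi i)"
proof -
  have "(\<Sum>i\<in>{-N..N}. c (i+k) * x powi i) = (\<Sum>i\<in>{-N+k..N+k}. c i * x powi (i - k))"
    by (rule sum.reindex_bij_witness[of _ "\<lambda>i. i - k" "\<lambda>i. i + k"]) auto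
  also have "\<dots> = (\<Sum>i\<in>{-N+k..N+k}. x powi (-k) * (c i * x powi i))"
  proof (rule sum.cong)
    fix i show "c i * x powi (i - k) = x powi (-k) * (c i * x powi i)"
      using power_int_add[of x "-k" i] x by (simp add: algebra_simps)
  qed simp
  also have "\<dots> = x powi (-k) * (\<Sum>i\<in>{-N+k..N+k}. c i * x powi i)"
    by (simp add: sum_distrib_left)
  also have "(\<Sum>i\<in>{-N+k..N+k}. c i * x powi i) = (\<Sum>i\<in>{-M..M}. c i * x powi i)"
    by (rule sum_supp_eq) (use supp le in \<open>auto dest!: supp\<close>)
  finally show ?thesis .
qed

lemma laurent_zero:
  fixes a :: "int \<Rightarrow> complex"
  assumes "\<And>x. x \<noteq> 0 \<Longrightarrow> (\<Sum>i\<in>{-int N..int N}. a i * x powi i) = 0"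
    and "i \<in> {-int N..int N}"
  shows "a i = 0"
proof -
  define c where "c k = a (int k - int N)" for k
  have eq: "(\<Sum>k\<le>2*N. c k * x^k) = x^N * (\<Sum>i\<in>{-int N..int N}. a i * x powi i)" if "x \<noteq> 0" for x
  proof -
    have "(\<Sum>k\<le>2*N. c k * x^k) = (\<Sum>i\<in>{-int N..int N}. a i * x powi (i + int N))"
      unfolding c_def
      by (rule sum.reindex_bij_witness[of _ "\<lambda>i. nat (i + int N)" "\<lambda>k. int k - int N"])
         (auto simp: power_int_def)
    also have "\<dots> = (\<Sum>i\<in>{-int N..int N}. x^N * (a i * x powi i))"
      by (rule sum.cong) (auto simp: power_int_add that)
    finally show ?thesis by (simp add: sum_distrib_left)
  qed
  have "{z. z \<noteq> 0} \<subseteq> {z. (\<Sum>k\<le>2*N. c k * z^k) = 0}"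
    using eq assms(1) by auto
  moreover have "infinite {z::complex. z \<noteq> 0}"
  proof
    assume "finite {z::complex. z \<noteq> 0}"
    then have "finite (insert 0 {z::complex. z \<noteq> 0})" by simp
    moreover have "insert 0 {z::complex. z \<noteq> 0} = UNIV" by auto
    ultimately show False by (simp add: infinite_UNIV_char_0)
  qed
  ultimately have "infinite {z. (\<Sum>k\<le>2*N. c k * z^k) = 0}"
    using finite_subset by blast
  then have "\<forall>k\<le>2*N. c k = 0" using polyfun_finite_roots by blast
  moreover have "nat (i + int N) \<le> 2 * N" using assms(2) by auto
  ultimately have "c (nat (i + int N)) = 0" by blast
  then show ?thesis using assms(2) by (simp add: c_def)
qed


fun bx :: "nat \<Rightarrow> int \<Rightarrow> complex" where
  "bx 0 i = (if i = 0 then 1 else 0)"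
| "bx (Suc n) i = bx n (i - 1) + bx n (i + 1)"

lemma bx_supp: "bx n i \<noteq> 0 \<Longrightarrow> \<bar>i\<bar> \<le> int n"
proof (induction n arbitrary: i)
  case 0 then show ?case by (auto split: if_splits)
next
  case (Suc n)
  then have "bx n (i - 1) \<noteq> 0 \<or> bx n (i + 1) \<noteq> 0" by auto
  then show ?case using Suc.IH by fastforce
qed

lemma bx_sum:
  assumes x: "x \<noteq> 0"
  shows "(\<Sum>i\<in>{-int n..int n}. bx n i * x powi i) = (x + 1/x)^n"
proof (induction n)
  case 0 then show ?case by simp
next
  case (Suc n)
  have "(\<Sum>i\<in>{-int (Suc n)..int (Suc n)}. bx (Suc n) i * x powi i) =
     (\<Sum>i\<in>{-int (Suc n)..int (Suc n)}. bx n (i + (-1)) * x powi i) +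
     (\<Sum>i\<in>{-int (Suc n)..int (Suc n)}. bx n (i + 1) * x powi i)"
    by (simp add: sum.distrib algebra_simps)
  also have "(\<Sum>i\<in>{-int (Suc n)..int (Suc n)}. bx n (i + (-1)) * x powi i) = x powi 1 * (x + 1/x)^n"
    using shift_sum[of "bx n" "int n" "-1" "int (Suc n)" x] bx_supp x Suc.IH by auto
  also have "(\<Sum>i\<in>{-int (Suc n)..int (Suc n)}. bx n (i + 1) * x powi i) = x powi (-1) * (x + 1/x)^n"
    using shift_sum[of "bx n" "int n" "1" "int (Suc n)" x] bx_supp x Suc.IH by auto
  finally show ?case using x by (simp add: field_simps power_int_minus)
qed

lemma bx_closed:
  "bx n i = (if even (int n + i) \<and> \<bar>i\<bar> \<le> int n then of_nat (n choose nat ((int n + i) div 2)) else 0)"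
proof (induction n arbitrary: i)
  case 0 then show ?case by auto
next
  case (Suc n)
  show ?case
  proof (cases "even (int n + 1 + i)")
    case False
    then show ?thesis using Suc by auto
  next
    case True
    then obtain k where k: "int n + 1 + i = 2 * k" by (metis evenE)
    show ?thesis
    proof (cases "\<bar>i\<bar> \<le> int n + 1")
      case False
      then show ?thesis using Suc True by auto
    next
      case True2: True
      have k0: "0 \<le> k" "k \<le> int n + 1" using k True2 by auto
      have E1: "int n + (i - 1) = 2 * (k - 1)" using k by simp
      have d1': "\<bar>i - 1\<bar> \<le> int n \<longleftrightarrow> 1 \<le> k" using k k0 by auto
      have e1: "bx n (i - 1) = (if 1 \<le> k then of_nat (n choose nat (k - 1)) else 0)"
        using Suc[of "i - 1"] unfolding E1 by (simp add: d1')
      have E2: "int n + (i + 1) = 2 * k" using k by simp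
      have d2': "\<bar>i + 1\<bar> \<le> int n \<longleftrightarrow> k \<le> int n" using k k0 by auto
      have e2: "bx n (i + 1) = (if k \<le> int n then of_nat (n choose nat k) else 0)"
        using Suc[of "i + 1"] unfolding E2 by (simp add: d2')
      have lhs: "bx (Suc n) i = (if 1 \<le> k then of_nat (n choose nat (k - 1)) else 0) +
           (if k \<le> int n then of_nat (n choose nat k) else 0)"
        using e1 e2 by simp
      have rhs: "nat ((int (Suc n) + i) div 2) = nat k" using k by simp
      have "of_nat (Suc n choose nat k) = (if 1 \<le> k then of_nat (n choose nat (k - 1)) else 0) +
           (if k \<le> int n then of_nat (n choose nat k) else (0::complex))"
      proof (cases "k = 0")
        case True then show ?thesis by simp
      next
        case False
        then obtain j where j: "nat k = Suc j" using k0 by (metis gr0_implies_Suc nat_0_le nat_eq_iff2 not_gr0 of_nat_0)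
        have "nat (k - 1) = j" using j by auto
        moreover have "k \<le> int n \<longleftrightarrow> Suc j \<le> n" using j by auto
        ultimately show ?thesis using j False k0
          by (auto simp: binomial_eq_0)
      qed
      then show ?thesis using lhs rhs True True2 by simp
    qed
  qed
qed

lemma bx_0: "bx l 0 = (if even l then of_nat (l choose (l div 2)) else 0)"
  by (simp add: bx_closed nat_div_distrib)

definition pm :: "complex \<Rightarrow> nat \<Rightarrow> int \<times> int \<Rightarrow> complex" where
  "pm v m q = (\<Sum>l\<le>m. of_nat (m choose l) * v^l * bx (m - l) (fst q) * bx l (snd q))"

lemma pm_supp: "pm v m (i,j) \<noteq> 0 \<Longrightarrow> \<bar>i\<bar> \<le> int m \<and> \<bar>j\<bar> \<le> int m"
proof -
  assume "pm v m (i,j) \<noteq> 0"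
  then obtain l where l: "l \<le> m" "bx (m - l) i \<noteq> 0" "bx l j \<noteq> 0"
    unfolding pm_def by (metis (no_types, lifting) mult_eq_0_iff sum.neutral fst_conv snd_conv atMost_iff)
  then show ?thesis using bx_supp[of "m-l" i] bx_supp[of l j] by auto
qed

lemma pm_0: "pm v 0 q = (if q = (0,0) then 1 else 0)"
  by (cases q) (auto simp: pm_def)

lemma binom_split:
  fixes F :: "nat \<Rightarrow> complex"
  shows "(\<Sum>l\<le>Suc m. of_nat (Suc m choose l) * F l) =
         (\<Sum>l\<le>m. of_nat (m choose l) * F l) + (\<Sum>l\<le>m. of_nat (m choose l) * F (Suc l))"
proof -
  have A: "(\<Sum>l\<le>Suc m. of_nat (Suc m choose l) * F l) = F 0 + (\<Sum>l\<le>m. of_nat (Suc m choose Suc l) * F (Suc l))"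
    by (subst sum.atMost_Suc_shift) simp
  also have "\<dots> = F 0 + (\<Sum>l\<le>m. of_nat (m choose l) * F (Suc l)) + (\<Sum>l\<le>m. of_nat (m choose Suc l) * F (Suc l))"
    by (simp add: sum.distrib algebra_simps)
  finally have A: "(\<Sum>l\<le>Suc m. of_nat (Suc m choose l) * F l) = F 0 + (\<Sum>l\<le>m. of_nat (m choose l) * F (Suc l)) + (\<Sum>l\<le>m. of_nat (m choose Suc l) * F (Suc l))" .
  have B: "F 0 + (\<Sum>l\<le>m. of_nat (m choose Suc l) * F (Suc l)) = (\<Sum>l\<le>Suc m. of_nat (m choose l) * F l)"
    by (subst sum.atMost_Suc_shift) simp
  have C: "(\<Sum>l\<le>Suc m. of_nat (m choose l) * F l) = (\<Sum>l\<le>m. of_nat (m choose l) * F l)"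
    by simp
  show ?thesis using A B C by (simp add: algebra_simps)
qed

lemma pm_rec:
  "pm v (Suc m) (i,j) = pm v m (i-1,j) + pm v m (i+1,j) + v * pm v m (i,j-1) + v * pm v m (i,j+1)"
proof -
  have "pm v (Suc m) (i,j) = (\<Sum>l\<le>Suc m. of_nat (Suc m choose l) * (v^l * bx (Suc m - l) i * bx l j))"
    unfolding pm_def by (simp add: algebra_simps)
  also have "\<dots> = (\<Sum>l\<le>m. of_nat (m choose l) * (v^l * bx (Suc m - l) i * bx l j)) +
      (\<Sum>l\<le>m. of_nat (m choose l) * (v^Suc l * bx (Suc m - Suc l) i * bx (Suc l) j))"
    by (rule binom_split)
  also have "(\<Sum>l\<le>m. of_nat (m choose l) * (v^l * bx (Suc m - l) i * bx l j)) = pm v m (i-1,j) + pm v m (i+1,j)"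
    unfolding pm_def by (simp add: Suc_diff_le sum.distrib algebra_simps)
  also have "(\<Sum>l\<le>m. of_nat (m choose l) * (v^Suc l * bx (Suc m - Suc l) i * bx (Suc l) j)) = v * pm v m (i,j-1) + v * pm v m (i,j+1)"
    unfolding pm_def by (simp add: sum.distrib sum_distrib_left algebra_simps)
  finally show ?thesis by simp
qed

lemma pm_sum:
  assumes x: "x \<noteq> 0" and y: "y \<noteq> 0"
  shows "(\<Sum>(i,j)\<in>{-int m..int m}\<times>{-int m..int m}. pm v m (i,j) * x powi i * y powi j) = (x + 1/x + v*(y + 1/y))^m"
proof -
  define f1 where "f1 l i = of_nat (m choose l) * v^l * bx (m - l) i * x powi i" for l i
  define f2 where "f2 l j = bx l j * y powi j" for l j
  let ?B = "{-int m..int m}"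
  have "(\<Sum>(i,j)\<in>?B\<times>?B. pm v m (i,j) * x powi i * y powi j)
     = (\<Sum>(i,j)\<in>?B\<times>?B. \<Sum>l\<le>m. f1 l i * f2 l j)"
    unfolding pm_def f1_def f2_def
    by (rule sum.cong[OF refl]) (auto simp: sum_distrib_right sum_distrib_left mult_ac)
  also have "\<dots> = (\<Sum>l\<le>m. \<Sum>(i,j)\<in>?B\<times>?B. f1 l i * f2 l j)"
    by (subst sum.swap) (simp add: case_prod_unfold)
  also have "\<dots> = (\<Sum>l\<le>m. (\<Sum>i\<in>?B. f1 l i) * (\<Sum>j\<in>?B. f2 l j))"
    by (simp add: sum_product sum.cartesian_product)
  also have "\<dots> = (\<Sum>l\<le>m. of_nat (m choose l) * v^l * (\<Sum>i\<in>{-int m..int m}. bx (m - l) i * x powi i) * (\<Sum>j\<in>{-int m..int m}. bx l j * y powi j))"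
    unfolding f1_def f2_def by (simp add: sum_distrib_left algebra_simps)
  also have "\<dots> = (\<Sum>l\<le>m. of_nat (m choose l) * v^l * (x + 1/x)^(m-l) * (y + 1/y)^l)"
  proof (rule sum.cong[OF refl])
    fix l assume l: "l \<in> {..m}"
    have "(\<Sum>i\<in>{-int m..int m}. bx (m - l) i * x powi i) = (\<Sum>i\<in>{-int (m-l)..int (m-l)}. bx (m - l) i * x powi i)"
      by (rule sum_supp_eq) (use l bx_supp[of "m-l"] in \<open>force+\<close>)
    moreover have "(\<Sum>j\<in>{-int m..int m}. bx l j * y powi j) = (\<Sum>j\<in>{-int l..int l}. bx l j * y powi j)"
      by (rule sum_supp_eq) (use l bx_supp[of "l"] in \<open>force+\<close>)
    ultimately show "of_nat (m choose l) * v^l * (\<Sum>i\<in>{-int m..int m}. bx (m - l) i * x powi i) * (\<Sum>j\<in>{-int m..int m}. bx l j * y powi j)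
      = of_nat (m choose l) * v^l * (x + 1/x)^(m-l) * (y + 1/y)^l"
      using bx_sum[OF x] bx_sum[OF y] by simp
  qed
  also have "\<dots> = (v*(y + 1/y) + (x + 1/x))^m"
    unfolding binomial_ring[of "v*(y + 1/y)" "x + 1/x" m]
    by (rule sum.cong[OF refl]) (simp add: power_mult_distrib)
  finally show ?thesis by (simp add: algebra_simps)
qed


definition fw :: "complex \<Rightarrow> nat \<Rightarrow> int \<times> int \<Rightarrow> complex" where
  "fw v n q = (\<Sum>ws\<in>{ws\<in>slit_walks n. walk_pos ws n = q}. v ^ vert ws)"

lemma finite_slit_walks: "finite (slit_walks n)"
proof -
  have "slit_walks n \<subseteq> {ws. set ws \<subseteq> sq_steps \<and> length ws = n}"
    by (auto simp: slit_walks_def slit_walk_def)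
  moreover have "finite {ws. set ws \<subseteq> sq_steps \<and> length ws = n}"
    by (rule finite_lists_length_eq) (simp add: sq_steps_def)
  ultimately show ?thesis by (rule finite_subset)
qed

lemma sum_fst_bound: "set ws \<subseteq> sq_steps \<Longrightarrow> \<bar>sum_list (map fst ws)\<bar> \<le> int (length ws) \<and> \<bar>sum_list (map snd ws)\<bar> \<le> int (length ws)"
proof (induction ws)
  case Nil then show ?case by simp
next
  case (Cons a ws)
  then have "a \<in> sq_steps" by simp
  then have "\<bar>fst a\<bar> \<le> 1 \<and> \<bar>snd a\<bar> \<le> 1" by (auto simp: sq_steps_def)
  then show ?case using Cons by auto
qed

lemma walk_pos_box:
  assumes "ws \<in> slit_walks n"
  shows "walk_pos ws n \<in> {-int n..int n} \<times> {-int n..int n}"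
proof -
  have "set ws \<subseteq> sq_steps" "length ws = n" using assms by (auto simp: slit_walks_def slit_walk_def)
  then show ?thesis using sum_fst_bound[of ws] by (auto simp: walk_pos_def abs_le_iff)
qed

lemma S_gf_fw:
  "S_gf x y v $ n = (\<Sum>(i,j)\<in>{-int n..int n} \<times> {-int n..int n}. fw v n (i,j) * x powi i * y powi j)"
proof -
  let ?B = "{-int n..int n} \<times> {-int n..int n}"
  let ?h = "\<lambda>ws. x powi fst (walk_pos ws n) * y powi snd (walk_pos ws n) * v ^ vert ws"
  have "S_gf x y v $ n = sum ?h (slit_walks n)" by (simp add: S_gf_def)
  also have "\<dots> = (\<Sum>q\<in>?B. sum ?h {ws\<in>slit_walks n. walk_pos ws n = q})"
  proof -
    have fin: "finite ?B" by simp
    have sub: "(\<lambda>ws. walk_pos ws n) ` slit_walks n \<subseteq> ?B" using walk_pos_box by blast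
    show ?thesis by (rule sum.group[symmetric, OF finite_slit_walks fin sub])
  qed
  also have "\<dots> = (\<Sum>q\<in>?B. fw v n q * x powi fst q * y powi snd q)"
  proof (rule sum.cong[OF refl])
    fix q
    have "sum ?h {ws\<in>slit_walks n. walk_pos ws n = q} = (\<Sum>ws\<in>{ws\<in>slit_walks n. walk_pos ws n = q}. x powi fst q * y powi snd q * v ^ vert ws)"
      by (rule sum.cong) auto
    then show "sum ?h {ws\<in>slit_walks n. walk_pos ws n = q} = fw v n q * x powi fst q * y powi snd q"
      by (simp add: fw_def sum_distrib_left sum_distrib_right mult_ac)
  qed
  finally show ?thesis by (simp add: case_prod_unfold)
qed

lemma slit_walks_0: "slit_walks 0 = {[]}"
  by (auto simp: slit_walks_def slit_walk_def)

lemma fw_0: "fw v 0 q = (if q = (0,0) then 1 else 0)"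
  by (auto simp: fw_def slit_walks_0 walk_pos_def vert_def)

lemma walk_pos_snoc_le: "m \<le> length ws \<Longrightarrow> walk_pos (ws @ [s]) m = walk_pos ws m"
  by (simp add: walk_pos_def)

lemma walk_pos_snoc_last: "walk_pos (ws @ [s]) (Suc (length ws)) = (fst (walk_pos ws (length ws)) + fst s, snd (walk_pos ws (length ws)) + snd s)"
  by (simp add: walk_pos_def)

lemma slit_walk_snoc:
  "slit_walk (ws @ [s]) \<longleftrightarrow> slit_walk ws \<and> s \<in> sq_steps \<and> walk_pos (ws @ [s]) (Suc (length ws)) \<notin> slit"
proof -
  have A: "(\<forall>m. 1 \<le> m \<and> m \<le> length (ws @ [s]) \<longrightarrow> walk_pos (ws @ [s]) m \<notin> slit) \<longleftrightarrow>
      (\<forall>m. 1 \<le> m \<and> m \<le> length ws \<longrightarrow> walk_pos ws m \<notin> slit) \<and> walk_pos (ws @ [s]) (Suc (length ws)) \<notin> slit"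
    (is "?L \<longleftrightarrow> ?R")
  proof
    assume L: ?L
    show ?R
    proof (intro conjI allI impI)
      fix m assume "1 \<le> m \<and> m \<le> length ws"
      then show "walk_pos ws m \<notin> slit" using L[rule_format, of m] walk_pos_snoc_le[of m ws s] by auto
    next
      show "walk_pos (ws @ [s]) (Suc (length ws)) \<notin> slit" using L by auto
    qed
  next
    assume R: ?R
    show ?L
    proof (intro allI impI)
      fix m assume m: "1 \<le> m \<and> m \<le> length (ws @ [s])"
      show "walk_pos (ws @ [s]) m \<notin> slit"
      proof (cases "m \<le> length ws")
        case True then show ?thesis using R m walk_pos_snoc_le[of m ws s] by auto
      next
        case False then have "m = Suc (length ws)" using m by auto
        then show ?thesis using R by auto
      qed
    qed
  qed
  show ?thesis unfolding slit_walk_def A by auto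
qed

lemma vert_snoc: "vert (ws @ [s]) = vert ws + (if fst s = 0 then 1 else 0)"
  by (simp add: vert_def)

lemma fw_Suc:
  "fw v (Suc n) (i,j) = (if (i,j) \<in> slit then 0 else
     fw v n (i-1,j) + fw v n (i+1,j) + v * fw v n (i,j-1) + v * fw v n (i,j+1))"
proof (cases "(i,j) \<in> slit")
  case True
  have "{ws\<in>slit_walks (Suc n). walk_pos ws (Suc n) = (i,j)} = {}"
    using True by (auto simp: slit_walks_def slit_walk_def)
  then show ?thesis using True unfolding fw_def by (simp only: sum.empty if_True)
next
  case False
  let ?T = "SIGMA s:sq_steps. {ws\<in>slit_walks n. walk_pos ws n = (i - fst s, j - snd s)}"
  let ?f = "\<lambda>(s, ws). ws @ [s]"
  have img: "{ws\<in>slit_walks (Suc n). walk_pos ws (Suc n) = (i,j)} = ?f ` ?T"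
  proof (intro equalityI subsetI)
    fix ws' assume ws': "ws' \<in> {ws\<in>slit_walks (Suc n). walk_pos ws (Suc n) = (i,j)}"
    then have len: "length ws' = Suc n" by (simp add: slit_walks_def)
    then obtain ws s where ws: "ws' = ws @ [s]" by (metis length_Suc_conv_rev)
    then have lws: "length ws = n" using len by simp
    have sw: "slit_walk ws \<and> s \<in> sq_steps" using ws' ws slit_walk_snoc by (auto simp: slit_walks_def)
    have "walk_pos ws' (Suc n) = (i,j)" using ws' by simp
    then have "walk_pos ws n = (i - fst s, j - snd s)"
      using walk_pos_snoc_last[of ws s] ws lws by (cases "walk_pos ws n") auto
    then have "(s, ws) \<in> ?T" using sw lws by (auto simp: slit_walks_def)
    then show "ws' \<in> ?f ` ?T" using ws by force
  next
    fix ws' assume "ws' \<in> ?f ` ?T"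
    then obtain s ws where sws: "(s,ws) \<in> ?T" "ws' = ws @ [s]" by auto
    then have lws: "length ws = n" and sw: "slit_walk ws" and s: "s \<in> sq_steps"
      and p: "walk_pos ws n = (i - fst s, j - snd s)"
      by (auto simp: slit_walks_def)
    have last: "walk_pos (ws @ [s]) (Suc (length ws)) = (i,j)"
      using walk_pos_snoc_last[of ws s] p lws by simp
    then have "slit_walk (ws @ [s])" using slit_walk_snoc sw s False by simp
    then show "ws' \<in> {ws\<in>slit_walks (Suc n). walk_pos ws (Suc n) = (i,j)}"
      using sws last lws by (simp add: slit_walks_def)
  qed
  have inj: "inj_on ?f ?T" by (auto simp: inj_on_def)
  have fin: "finite ?T" using finite_slit_walks by (auto simp: sq_steps_def)
  have "fw v (Suc n) (i,j) = (\<Sum>p\<in>?T. v ^ vert (?f p))"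
    unfolding fw_def img by (rule sum.reindex[OF inj, unfolded comp_def])
  also have "\<dots> = (\<Sum>(s,ws)\<in>?T. v ^ vert (ws @ [s]))"
    by (simp add: case_prod_unfold)
  also have "\<dots> = (\<Sum>s\<in>sq_steps. \<Sum>ws\<in>{ws\<in>slit_walks n. walk_pos ws n = (i - fst s, j - snd s)}. v ^ vert (ws @ [s]))"
    by (rule sum.Sigma[symmetric]) (use finite_slit_walks in \<open>auto simp: sq_steps_def\<close>)
  also have "\<dots> = (\<Sum>s\<in>sq_steps. (if fst s = 0 then v else 1) * fw v n (i - fst s, j - snd s))"
    by (rule sum.cong[OF refl]) (auto simp: fw_def vert_snoc sum_distrib_left)
  also have "\<dots> = fw v n (i-1,j) + fw v n (i+1,j) + v * fw v n (i,j-1) + v * fw v n (i,j+1)"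
    by (simp add: sq_steps_def)
  finally show ?thesis using False by simp
qed


definition pz :: "nat \<Rightarrow> (complex \<Rightarrow> complex) \<Rightarrow> bool" where
  "pz n f \<longleftrightarrow> (\<exists>p. degree p \<le> n \<and> (\<forall>z. f z = poly p z))"

lemma pz_const: "pz n (\<lambda>z. c)"
  unfolding pz_def by (rule exI[of _ "[:c:]"]) simp

lemma pz_id: "pz 1 (\<lambda>z. z)"
  unfolding pz_def by (rule exI[of _ "[:0,1:]"]) simp

lemma pz_mono: "pz m f \<Longrightarrow> m \<le> n \<Longrightarrow> pz n f"
  unfolding pz_def by (meson order.trans)

lemma pz_add: "pz n f \<Longrightarrow> pz n g \<Longrightarrow> pz n (\<lambda>z. f z + g z)"
  unfolding pz_def
  by (metis (no_types, lifting) degree_add_le poly_add)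

lemma pz_uminus: "pz n f \<Longrightarrow> pz n (\<lambda>z. - f z)"
  unfolding pz_def by (metis degree_minus poly_minus)

lemma pz_diff: "pz n f \<Longrightarrow> pz n g \<Longrightarrow> pz n (\<lambda>z. f z - g z)"
  using pz_add[of n f "\<lambda>z. - g z"] pz_uminus[of n g] by simp

lemma pz_mult: "pz a f \<Longrightarrow> pz b g \<Longrightarrow> pz (a + b) (\<lambda>z. f z * g z)"
  unfolding pz_def
proof (elim exE conjE)
  fix p q assume "degree p \<le> a" "\<forall>z. f z = poly p z" "degree q \<le> b" "\<forall>z. g z = poly q z"
  then show "\<exists>r. degree r \<le> a + b \<and> (\<forall>z. f z * g z = poly r z)"
    by (intro exI[of _ "p * q"]) (auto intro: order.trans[OF degree_mult_le])
qed

lemma pz_cmult: "pz n f \<Longrightarrow> pz n (\<lambda>z. c * f z)"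
  using pz_mult[OF pz_const[of 0 c]] by simp

lemma pz_sum: "finite A \<Longrightarrow> (\<And>i. i \<in> A \<Longrightarrow> pz n (f i)) \<Longrightarrow> pz n (\<lambda>z. \<Sum>i\<in>A. f i z)"
proof (induction A rule: finite_induct)
  case empty then show ?case using pz_const[of n 0] by simp
next
  case (insert a A)
  then show ?case using pz_add[of n "f a" "\<lambda>z. \<Sum>i\<in>A. f i z"] by simp
qed

lemma pz_poly: "pz n f \<Longrightarrow> \<exists>p. degree p \<le> n \<and> (\<forall>z. f z = poly p z)"
  by (simp add: pz_def)

lemma fam_mult:
  assumes "\<And>n. pz n (\<lambda>z. A z $ n)" "\<And>n. pz n (\<lambda>z. B z $ n)"
  shows "pz n (\<lambda>z. (A z * B z) $ n)"
proof -
  have "pz n (\<lambda>z. \<Sum>i=0..n. A z $ i * B z $ (n - i))"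
  proof (rule pz_sum)
    fix i assume "i \<in> {0..n}"
    then show "pz n (\<lambda>z. A z $ i * B z $ (n - i))"
      using pz_mult[OF assms(1)[of i] assms(2)[of "n-i"]] by simp
  qed simp
  then show ?thesis by (simp add: fps_mult_nth)
qed

lemma fam_inverse:
  assumes A: "\<And>n. pz n (\<lambda>z. A z $ n)" and c: "\<And>z. A z $ 0 = c" "c \<noteq> 0"
  shows "pz n (\<lambda>z. inverse (A z) $ n)"
proof (induction n rule: less_induct)
  case (less n)
  show ?case
  proof (cases n)
    case 0 then show ?thesis using c by (simp add: pz_const)
  next
    case (Suc m)
    have eq: "inverse (A z) $ n = - (\<Sum>i\<in>{1..n}. A z $ i * inverse (A z) $ (n - i)) / c" for z
    proof -
      have "(A z * inverse (A z)) $ n = 0" using c Suc by (simp add: inverse_mult_eq_1')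
      then have "(\<Sum>i=0..n. A z $ i * inverse (A z) $ (n - i)) = 0" by (simp add: fps_mult_nth)
      then have "c * inverse (A z) $ n + (\<Sum>i\<in>{1..n}. A z $ i * inverse (A z) $ (n - i)) = 0"
        using c by (simp add: sum.atLeast_Suc_atMost)
      then show ?thesis using c by (simp add: field_simps eq_neg_iff_add_eq_0)
    qed
    have "pz n (\<lambda>z. \<Sum>i\<in>{1..n}. A z $ i * inverse (A z) $ (n - i))"
    proof (rule pz_sum)
      fix i assume i: "i \<in> {1..n}"
      then have "pz (i + (n - i)) (\<lambda>z. A z $ i * inverse (A z) $ (n - i))"
        using pz_mult[OF A[of i] less[of "n - i"]] by auto
      then show "pz n (\<lambda>z. A z $ i * inverse (A z) $ (n - i))" using i by simp
    qed simp
    then have "pz n (\<lambda>z. (- 1 / c) * (\<Sum>i\<in>{1..n}. A z $ i * inverse (A z) $ (n - i)))"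
      by (rule pz_cmult)
    then show ?thesis using eq by simp
  qed
qed

lemma fps_sqrt_sq: "a $ 0 \<noteq> 0 \<Longrightarrow> fps_sqrt a ^ 2 = a"
  unfolding fps_sqrt_def
  using power_radical[of a "\<lambda>_ z. csqrt z" 1] power2_csqrt[of "a $ 0", unfolded power2_eq_square]
  by (simp add: numeral_2_eq_2)

lemma fps_sqrt_nth_0 [simp]: "fps_sqrt a $ 0 = csqrt (a $ 0)"
  unfolding fps_sqrt_def by simp

lemma fam_sqrt:
  assumes A: "\<And>n. pz n (\<lambda>z. a z $ n)" and c: "\<And>z. a z $ 0 = c" "c \<noteq> 0"
  shows "pz n (\<lambda>z. fps_sqrt (a z) $ n)"
proof (induction n rule: less_induct)
  case (less n)
  show ?case
  proof (cases n)
    case 0 then show ?thesis using c by (simp add: pz_const)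
  next
    case (Suc m)
    let ?S = "\<lambda>z. fps_sqrt (a z)"
    have s0: "?S z $ 0 = csqrt c" for z using c by simp
    have cs: "csqrt c \<noteq> 0" using c by simp
    have eq: "?S z $ n = (a z $ n - (\<Sum>i\<in>{1..m}. ?S z $ i * ?S z $ (n - i))) / (2 * csqrt c)" for z
    proof -
      have "a z $ n = (?S z ^ 2) $ n" using fps_sqrt_sq[of "a z"] c by simp
      also have "\<dots> = (\<Sum>i=0..n. ?S z $ i * ?S z $ (n - i))" by (simp add: fps_square_nth atLeast0AtMost)
      also have "\<dots> = ?S z $ 0 * ?S z $ n + (\<Sum>i\<in>{1..n}. ?S z $ i * ?S z $ (n - i))"
        by (simp add: sum.atLeast_Suc_atMost)
      also have "(\<Sum>i\<in>{1..n}. ?S z $ i * ?S z $ (n - i)) = (\<Sum>i\<in>{1..m}. ?S z $ i * ?S z $ (n - i)) + ?S z $ n * ?S z $ 0"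
        using Suc by simp
      finally have "a z $ n = 2 * csqrt c * ?S z $ n + (\<Sum>i\<in>{1..m}. ?S z $ i * ?S z $ (n - i))"
        using s0 by (simp add: algebra_simps)
      then show ?thesis using cs by (simp add: field_simps)
    qed
    have "pz n (\<lambda>z. \<Sum>i\<in>{1..m}. ?S z $ i * ?S z $ (n - i))"
    proof (rule pz_sum)
      fix i assume i: "i \<in> {1..m}"
      then have "pz (i + (n - i)) (\<lambda>z. ?S z $ i * ?S z $ (n - i))"
        using pz_mult[OF less[of i] less[of "n - i"]] Suc by auto
      then show "pz n (\<lambda>z. ?S z $ i * ?S z $ (n - i))" using i Suc by simp
    qed simp
    then have "pz n (\<lambda>z. (1 / (2 * csqrt c)) * (a z $ n - (\<Sum>i\<in>{1..m}. ?S z $ i * ?S z $ (n - i))))"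
      by (intro pz_cmult pz_diff A)
    then show ?thesis using eq by (simp add: field_simps)
  qed
qed

lemma two_X_const_nth: "(2 * fps_X * fps_const c :: complex fps) $ n = (if n = 1 then 2 * c else 0)"
proof -
  have "(2 * fps_X * fps_const c :: complex fps) = fps_X * fps_const (2 * c)"
    by (simp add: numeral_fps_const algebra_simps flip: fps_const_mult)
  moreover have "(fps_X * fps_const d :: complex fps) $ n = (if n = 1 then d else 0)" for d
    by (cases n) auto
  ultimately show ?thesis by (simp only:)
qed


declare bx.simps(2)[simp del]

definition Qs :: "complex \<Rightarrow> complex fps" where
  "Qs u = inverse (1 - fps_const u * fps_X)"

lemma Qs_mult: "Qs u * (1 - fps_const u * fps_X) = 1"
  unfolding Qs_def by (rule inverse_mult_eq_1) simp

lemma Qs_eq: "Qs u = Abs_fps (\<lambda>k. u ^ k)"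
proof -
  have "(1 - fps_const u * fps_X) * Abs_fps (\<lambda>k. u ^ k) = 1"
  proof (rule fps_ext)
    fix n
    have "(1 - fps_const u * fps_X) * Abs_fps (\<lambda>k. u ^ k) = Abs_fps (\<lambda>k. u ^ k) - fps_const u * (fps_X * Abs_fps (\<lambda>k. u ^ k))"
      by (simp add: algebra_simps)
    then show "((1 - fps_const u * fps_X) * Abs_fps (\<lambda>k. u ^ k)) $ n = (1 :: complex fps) $ n"
      by (cases n) simp_all
  qed
  then show ?thesis unfolding Qs_def by (rule fps_inverse_unique)
qed

lemma Qs_pow: "(Qs u) ^ Suc l $ k = of_nat ((l + k) choose k) * u ^ k"
proof (induction l arbitrary: k)
  case 0 then show ?case by (simp add: Qs_eq)
next
  case (Suc l)
  have "(Qs u) ^ Suc (Suc l) $ k = (Qs u * Qs u ^ Suc l) $ k" by (simp only: power_Suc)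
  also have "\<dots> = (\<Sum>i=0..k. Qs u $ i * (Qs u ^ Suc l) $ (k - i))" by (rule fps_mult_nth)
  also have "\<dots> = (\<Sum>i=0..k. u ^ i * (of_nat ((l + (k - i)) choose (k - i)) * u ^ (k - i)))"
    by (rule sum.cong[OF refl]) (simp only: Suc.IH, simp add: Qs_eq)
  also have "\<dots> = (\<Sum>i=0..k. u ^ k * of_nat ((l + (k - i)) choose (k - i)))"
    by (rule sum.cong) (auto simp: power_add[symmetric])
  also have "\<dots> = u ^ k * (\<Sum>i=0..k. of_nat ((l + (k - i)) choose (k - i)))"
    by (simp add: sum_distrib_left)
  also have "(\<Sum>i=0..k. of_nat ((l + (k - i)) choose (k - i))) = (\<Sum>i=0..k. of_nat ((l + i) choose i) :: complex)"
    by (subst sum.atLeastAtMost_rev) simp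
  also have "\<dots> = of_nat (\<Sum>i\<le>k. (l + i) choose i)"
    by (simp add: atLeast0AtMost)
  also have "\<dots> = of_nat (Suc l + k choose k)"
    by (simp add: sum_choose_lower)
  finally show ?case by simp
qed

definition Gs :: "complex fps" where "Gs = Abs_fps (\<lambda>l. bx l 0)"

lemma central_id: "(2*k+2) * ((2*k+2) choose (k+1)) = 4 * (2*k+1) * ((2*k) choose k)"
proof -
  define X where "X = (2*k+2) choose (k+1)"
  define Y where "Y = (2*k+1) choose k"
  define Z where "Z = (2*k) choose k"
  have a: "(k+1) * X = (2*k+2) * Y"
    using Suc_times_binomial[of k "2*k+1"] unfolding X_def Y_def by simp
  have b0: "(k+1) * ((2*k+1) choose (k+1)) = (2*k+1) * Z"
    using Suc_times_binomial[of k "2*k"] unfolding Z_def by simp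
  have c: "(2*k+1) choose (k+1) = Y"
    using binomial_symmetric[of k "2*k+1"] unfolding Y_def by simp
  have b: "(k+1) * Y = (2*k+1) * Z" using b0 c by simp
  have "(k+1) * ((2*k+2) * X) = (2*k+2) * ((k+1) * X)" by (simp only: mult_ac)
  also have "\<dots> = (2*k+2) * ((2*k+2) * Y)" by (simp only: a)
  also have "\<dots> = 2 * (2*k+2) * ((k+1) * Y)" by (simp only: mult_ac) simp
  also have "\<dots> = 2 * (2*k+2) * ((2*k+1) * Z)" by (simp only: b)
  also have "\<dots> = (k+1) * (4 * (2*k+1) * Z)" by algebra
  finally have "(k+1) * ((2*k+2) * X) = (k+1) * (4 * (2*k+1) * Z)" .
  then have "(2*k+2) * X = 4 * (2*k+1) * Z" by (simp only: mult_left_cancel)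
  then show ?thesis unfolding X_def Z_def .
qed

lemma Gs_rec: "of_nat (Suc n + 1) * bx (Suc n + 1) 0 = 4 * of_nat (Suc n) * bx n 0"
proof (cases "even n")
  case True
  then obtain k where k: "n = 2 * k" by (auto elim: evenE)
  have e: "of_nat ((2*k+2) * ((2*k+2) choose (k+1))) = (of_nat (4 * (2*k+1) * ((2*k) choose k)) :: complex)"
    by (simp only: central_id)
  have b1: "bx (Suc n + 1) 0 = of_nat ((2*k+2) choose (k+1))"
  proof -
    have "Suc n + 1 = 2 * (k+1)" using k by simp
    then show ?thesis by (simp only: bx_0) simp
  qed
  have b2: "bx n 0 = of_nat ((2*k) choose k)" using k by (simp only: bx_0) simp
  have "of_nat (Suc n + 1) * bx (Suc n + 1) 0 = (of_nat ((2*k+2) * ((2*k+2) choose (k+1))) :: complex)"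
    using k b1 by (simp only: of_nat_mult) simp
  also have "\<dots> = of_nat (4 * (2*k+1) * ((2*k) choose k))" by (rule e)
  also have "\<dots> = 4 * of_nat (Suc n) * bx n 0"
    using k b2 by (simp only: of_nat_mult) simp
  finally show ?thesis .
next
  case False
  then show ?thesis by (simp add: bx_0)
qed

lemma ring_aux:
  fixes G D P dP X c :: "'a::comm_ring_1"
  assumes "P * D = c * X * G" "dP = - (c + c) * X"
  shows "D * G * P + G * D * P + G * G * dP = 0"
proof -
  have "D * G * P + G * D * P + G * G * dP = (G + G) * (P * D) + G * G * dP" by (simp add: algebra_simps)
  also have "\<dots> = 0" using assms by (simp add: algebra_simps)
  finally show ?thesis .
qed

lemma ring_aux2:
  fixes Q A c V X :: "'a::comm_ring_1"
  shows "Q ^ 2 * (A ^ 2 - c * V ^ 2 * X ^ 2) = (Q * A) ^ 2 - c * (V * X * Q) ^ 2"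
  by (simp add: power_mult_distrib algebra_simps)

lemma ring_aux3:
  fixes Q G D :: "'a::comm_ring_1"
  shows "(Q * G) ^ 2 * D = G ^ 2 * (Q ^ 2 * D)"
  by (simp add: power_mult_distrib algebra_simps)

lemma Gs_sq: "Gs ^ 2 * (1 - fps_const 4 * fps_X ^ 2) = 1"
proof -
  let ?P = "1 - fps_const 4 * fps_X ^ 2 :: complex fps"
  have ode: "?P * fps_deriv Gs = fps_const 4 * fps_X * Gs"
  proof (rule fps_ext)
    fix n
    have "?P * fps_deriv Gs = fps_deriv Gs - fps_const 4 * (fps_X ^ 2 * fps_deriv Gs)"
      by (simp add: algebra_simps)
    then have l: "(?P * fps_deriv Gs) $ n = of_nat (n+1) * bx (n+1) 0 - 4 * (if n < 2 then 0 else of_nat (n - 2 + 1) * bx (n - 2 + 1) 0)"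
      by (simp add: fps_X_power_mult_nth Gs_def)
    have r: "(fps_const 4 * fps_X * Gs) $ n = (if n = 0 then 0 else 4 * bx (n - 1) 0)"
      by (simp add: Gs_def mult.assoc)
    show "(?P * fps_deriv Gs) $ n = (fps_const 4 * fps_X * Gs) $ n"
    proof (cases n)
      case 0 then show ?thesis using l r by (simp add: bx_0)
    next
      case (Suc m)
      show ?thesis
      proof (cases m)
        case 0 then show ?thesis using l r Suc by (simp add: bx_0 numeral_2_eq_2)
      next
        case (Suc m')
        have "of_nat (Suc m' + 1 + 1) * bx (Suc m' + 1 + 1) 0 = 4 * of_nat (Suc m' + 1) * bx (m' + 1) 0"
          using Gs_rec[of "m' + 1"] by simp
        then show ?thesis using l r Suc \<open>n = Suc m\<close> by (simp add: algebra_simps)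
      qed
    qed
  qed
  have dP: "fps_deriv ?P = - (fps_const 4 + fps_const 4) * fps_X"
  proof (rule fps_ext)
    fix n show "fps_deriv ?P $ n = (- (fps_const 4 + fps_const 4) * fps_X) $ n"
      by (cases n) (auto simp: numeral_2_eq_2 fps_numeral_nth)
  qed
  have "fps_deriv (Gs * Gs * ?P) = fps_deriv Gs * Gs * ?P + Gs * fps_deriv Gs * ?P + Gs * Gs * fps_deriv ?P"
    by (simp only: fps_deriv_mult) (simp only: algebra_simps)
  also have "\<dots> = 0"
    by (rule ring_aux[OF ode dP])
  finally have "fps_deriv (Gs ^ 2 * ?P) = 0" by (simp only: power2_eq_square)
  then have "Gs ^ 2 * ?P = fps_const ((Gs ^ 2 * ?P) $ 0)" by (simp only: fps_deriv_eq_0_iff)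
  also have "(Gs ^ 2 * ?P) $ 0 = 1" by (simp add: Gs_def power2_eq_square)
  finally show ?thesis by simp
qed

definition Dt :: "complex \<Rightarrow> complex \<Rightarrow> complex fps" where
  "Dt u v = Qs u * (Gs oo (fps_const v * fps_X * Qs u))"

lemma Dt_nth: "Dt u v $ m = (\<Sum>l\<le>m. of_nat (m choose l) * v ^ l * bx l 0 * u ^ (m - l))"
proof -
  let ?w = "fps_const v * fps_X * Qs u"
  have w0: "?w $ 0 = 0" by (simp add: mult.assoc)
  define Gm where "Gm = (\<Sum>l\<le>m. fps_const (bx l 0) * fps_X ^ l)"
  have Gm_nth: "Gm $ i = (if i \<le> m then bx i 0 else 0)" for i
  proof -
    have "Gm $ i = (\<Sum>k\<le>m. if k = i then bx k 0 else 0)"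
      unfolding Gm_def fps_sum_nth by (rule sum.cong) auto
    then show ?thesis by (simp add: sum.delta)
  qed
  have c1: "(Gs oo ?w) $ j = (Gm oo ?w) $ j" if "j \<le> m" for j
    unfolding fps_compose_nth by (rule sum.cong) (use that in \<open>auto simp: Gm_nth Gs_def\<close>)
  have "Dt u v $ m = (Qs u * (Gm oo ?w)) $ m"
    unfolding Dt_def fps_mult_nth by (rule sum.cong) (auto simp: c1)
  also have "Gm oo ?w = (\<Sum>l\<le>m. fps_const (bx l 0) * ?w ^ l)"
    unfolding Gm_def fps_compose_sum_distrib
  proof (rule sum.cong[OF refl])
    fix l
    have "(fps_const (bx l 0) * fps_X ^ l) oo ?w = (fps_const (bx l 0) oo ?w) * (fps_X ^ l oo ?w)"
      by (rule fps_compose_mult_distrib[OF w0])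
    also have "fps_X ^ l oo ?w = (fps_X oo ?w) ^ l"
      by (rule fps_compose_power[OF w0, symmetric])
    also have "fps_X oo ?w = ?w" by (rule fps_X_fps_compose_startby0[OF w0])
    also have "fps_const (bx l 0) oo ?w = fps_const (bx l 0)" by (rule fps_const_compose)
    finally show "(fps_const (bx l 0) * fps_X ^ l) oo ?w = fps_const (bx l 0) * ?w ^ l" .
  qed
  also have "Qs u * (\<Sum>l\<le>m. fps_const (bx l 0) * ?w ^ l) = (\<Sum>l\<le>m. fps_const (bx l 0 * v ^ l) * (fps_X ^ l * Qs u ^ Suc l))"
    unfolding sum_distrib_left
  proof (rule sum.cong[OF refl])
    fix l
    show "Qs u * (fps_const (bx l 0) * ?w ^ l) = fps_const (bx l 0 * v ^ l) * (fps_X ^ l * Qs u ^ Suc l)"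
      by (simp only: power_mult_distrib fps_const_power fps_const_mult[symmetric] power_Suc mult_ac)
  qed
  also have "\<dots> $ m = (\<Sum>l\<le>m. of_nat (m choose l) * v ^ l * bx l 0 * u ^ (m - l))"
    unfolding fps_sum_nth
  proof (rule sum.cong[OF refl])
    fix l assume l: "l \<in> {..m}"
    have "m choose (m - l) = m choose l" using l binomial_symmetric[of l m] by simp
    then show "(fps_const (bx l 0 * v ^ l) * (fps_X ^ l * Qs u ^ Suc l)) $ m = of_nat (m choose l) * v ^ l * bx l 0 * u ^ (m - l)"
      using l by (simp add: fps_X_power_mult_nth Qs_pow del: power_Suc)
  qed
  finally show ?thesis .
qed

lemma Dt_sq:
  "Dt u v ^ 2 * ((1 - fps_const u * fps_X) ^ 2 - fps_const (4 * v^2) * fps_X ^ 2) = 1"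
proof -
  let ?w = "fps_const v * fps_X * Qs u"
  have w0: "?w $ 0 = 0" by (simp add: mult.assoc)
  have "(Gs ^ 2 * (1 - fps_const 4 * fps_X ^ 2)) oo ?w = 1"
    by (simp only: Gs_sq fps_compose_1)
  moreover have "(Gs ^ 2 * (1 - fps_const 4 * fps_X ^ 2)) oo ?w = (Gs oo ?w) ^ 2 * (1 - fps_const 4 * ?w ^ 2)"
  proof -
    have "(Gs ^ 2 * (1 - fps_const 4 * fps_X ^ 2)) oo ?w = (Gs ^ 2 oo ?w) * ((1 - fps_const 4 * fps_X ^ 2) oo ?w)"
      by (rule fps_compose_mult_distrib[OF w0])
    also have "Gs ^ 2 oo ?w = (Gs oo ?w) ^ 2" by (rule fps_compose_power[OF w0, symmetric])
    also have "(1 - fps_const 4 * fps_X ^ 2) oo ?w = (1 oo ?w) - ((fps_const 4 oo ?w) * (fps_X ^ 2 oo ?w))"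
      by (simp only: fps_compose_sub_distrib fps_compose_mult_distrib[OF w0])
    also have "fps_X ^ 2 oo ?w = (fps_X oo ?w) ^ 2" by (rule fps_compose_power[OF w0, symmetric])
    also have "fps_X oo ?w = ?w" by (rule fps_X_fps_compose_startby0[OF w0])
    finally show ?thesis by (simp only: fps_compose_1 fps_const_compose)
  qed
  ultimately have e: "(Gs oo ?w) ^ 2 * (1 - fps_const 4 * ?w ^ 2) = 1" by simp
  have q: "Qs u ^ 2 * ((1 - fps_const u * fps_X) ^ 2 - fps_const (4 * v^2) * fps_X ^ 2) = 1 - fps_const 4 * ?w ^ 2"
  proof -
    have "fps_const (4 * v^2) = fps_const 4 * fps_const v ^ 2" by simp
    then have "Qs u ^ 2 * ((1 - fps_const u * fps_X) ^ 2 - fps_const (4 * v^2) * fps_X ^ 2) =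
        (Qs u * (1 - fps_const u * fps_X)) ^ 2 - fps_const 4 * ?w ^ 2"
      by (simp only: ring_aux2)
    then show ?thesis by (simp add: Qs_mult)
  qed
  have "Dt u v ^ 2 * ((1 - fps_const u * fps_X) ^ 2 - fps_const (4 * v^2) * fps_X ^ 2) =
      (Gs oo ?w) ^ 2 * (Qs u ^ 2 * ((1 - fps_const u * fps_X) ^ 2 - fps_const (4 * v^2) * fps_X ^ 2))"
    unfolding Dt_def by (rule ring_aux3)
  also have "\<dots> = 1" using q e by simp
  finally show ?thesis .
qed

lemma Dt_0: "Dt u v $ 0 = 1"
  by (simp add: Dt_nth bx_0)


definition d1 :: "complex \<Rightarrow> complex fps" where
  "d1 v = (1 - 2 * fps_X * fps_const (1 + v)) * (1 + 2 * fps_X * fps_const (1 - v))"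
definition d2 :: "complex \<Rightarrow> complex fps" where
  "d2 v = (1 - 2 * fps_X * fps_const (1 - v)) * (1 + 2 * fps_X * fps_const (1 + v))"

definition Af :: "complex \<Rightarrow> complex \<Rightarrow> complex fps" where
  "Af v z = fps_sqrt (1 - 2 * fps_X * fps_const (v + z) + fps_sqrt (d1 v))"
definition Bf :: "complex \<Rightarrow> complex \<Rightarrow> complex fps" where
  "Bf v z = fps_sqrt (1 + 2 * fps_X * fps_const (v - z) + fps_sqrt (d2 v))"
definition Cf :: "complex \<Rightarrow> complex \<Rightarrow> complex fps" where
  "Cf v z = fps_const (1/2) * (Af v z * Bf v z)"

lemma d1_0: "d1 v $ 0 = 1" by (simp add: d1_def)
lemma d2_0: "d2 v $ 0 = 1" by (simp add: d2_def)

lemma inner1_0: "(1 - 2 * fps_X * fps_const (v + z) + fps_sqrt (d1 v)) $ 0 = 2"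
  by (simp add: d1_0 mult.assoc)
lemma inner2_0: "(1 + 2 * fps_X * fps_const (v - z) + fps_sqrt (d2 v)) $ 0 = 2"
  by (simp add: d2_0 mult.assoc)

lemma pz_lin1: "pz n (\<lambda>z. if n = 1 then 2 * (w + z) else (0::complex))"
proof (cases "n = 1")
  case True
  have "pz 1 (\<lambda>z. 2 * w + 2 * z)" by (intro pz_add pz_const pz_cmult pz_id)
  then show ?thesis using True by (simp add: algebra_simps)
next
  case False then show ?thesis by (simp add: pz_const)
qed

lemma pz_inner1: "pz n (\<lambda>z. (1 - 2 * fps_X * fps_const (v + z) + fps_sqrt (d1 v)) $ n)"
proof -
  have eq: "(1 - 2 * fps_X * fps_const (v + z) + fps_sqrt (d1 v)) $ n =
      ((1::complex fps) $ n - (if n = 1 then 2 * (v + z) else 0)) + fps_sqrt (d1 v) $ n" for z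
    by (simp only: fps_add_nth fps_sub_nth two_X_const_nth)
  show ?thesis unfolding eq by (intro pz_add pz_diff pz_const pz_lin1)
qed

lemma pz_inner2: "pz n (\<lambda>z. (1 + 2 * fps_X * fps_const (v - z) + fps_sqrt (d2 v)) $ n)"
proof -
  have eq: "(1 + 2 * fps_X * fps_const (v - z) + fps_sqrt (d2 v)) $ n =
      ((1::complex fps) $ n + (- 1) * (if n = 1 then 2 * (- v + z) else 0)) + fps_sqrt (d2 v) $ n" for z
    by (simp only: fps_add_nth two_X_const_nth) simp
  show ?thesis unfolding eq by (intro pz_add pz_cmult pz_const pz_lin1)
qed

lemma pz_Cf: "pz n (\<lambda>z. Cf v z $ n)"
proof -
  have a: "pz n (\<lambda>z. Af v z $ n)" for n
    unfolding Af_def by (rule fam_sqrt[OF pz_inner1 inner1_0]) simp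
  have b: "pz n (\<lambda>z. Bf v z $ n)" for n
    unfolding Bf_def by (rule fam_sqrt[OF pz_inner2 inner2_0]) simp
  have "pz n (\<lambda>z. 1/2 * (Af v z * Bf v z) $ n)"
    by (intro pz_cmult fam_mult a b)
  then show ?thesis by (simp add: Cf_def)
qed

lemma Cf_0: "Cf v z $ 0 = 1"
proof -
  have "csqrt 2 * csqrt 2 = (2::complex)" using power2_csqrt[of 2] by (simp add: power2_eq_square)
  then show ?thesis by (simp add: Cf_def Af_def Bf_def inner1_0[simplified] inner2_0[simplified] d1_0 d2_0 mult.assoc)
qed

lemma key_alg:
  fixes X s a x z v :: "'a::comm_ring_1"
  assumes "s^2 = (1 - 2*v*X)^2 - 4*X^2" "x*z = 1" "a = 1 - 2*v*X + s"
  shows "(a - 2*z*X)*(a - 2*x*X) = 2*a*(1 - (x+z)*X - 2*v*X)"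
proof -
  have "(a - 2*z*X)*(a - 2*x*X) - 2*a*(1 - (x+z)*X - 2*v*X) =
     (s^2 - ((1 - 2*v*X)^2 - 4*X^2)) + 4*X^2*(x*z - 1)"
    unfolding assms(3) by (simp add: algebra_simps power2_eq_square)
  also have "\<dots> = 0" using assms(1,2) by simp
  finally show ?thesis by simp
qed

lemma sq_eq_fps:
  fixes P Q :: "complex fps"
  assumes "P ^ 2 = Q ^ 2" "P $ 0 = Q $ 0" "P $ 0 \<noteq> 0"
  shows "P = Q"
proof -
  have "(P - Q) * (P + Q) = 0" using assms(1) by (simp add: algebra_simps power2_eq_square)
  moreover have "P + Q \<noteq> 0"
  proof
    assume "P + Q = 0"
    then have "(P + Q) $ 0 = 0" by simp
    then show False using assms(2,3) by simp
  qed
  ultimately show ?thesis by simp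
qed


lemma d1_eq: "d1 v = (1 - 2 * fps_const v * fps_X) ^ 2 - 4 * fps_X ^ 2"
  unfolding d1_def by (simp add: algebra_simps power2_eq_square flip: fps_const_add fps_const_sub)

lemma d2_eq: "d2 v = (1 - 2 * fps_const (-v) * fps_X) ^ 2 - 4 * fps_X ^ 2"
  unfolding d2_def by (simp add: algebra_simps power2_eq_square flip: fps_const_add fps_const_sub fps_const_neg)

definition al1 :: "complex \<Rightarrow> complex fps" where "al1 v = 1 - 2 * fps_const v * fps_X + fps_sqrt (d1 v)"
definition al2 :: "complex \<Rightarrow> complex fps" where "al2 v = 1 - 2 * fps_const (-v) * fps_X + fps_sqrt (d2 v)"

lemma Af_sq: "Af v z ^ 2 = al1 v - 2 * fps_const z * fps_X"
proof -
  have "Af v z ^ 2 = 1 - 2 * fps_X * fps_const (v + z) + fps_sqrt (d1 v)"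
    unfolding Af_def by (rule fps_sqrt_sq) (simp add: d1_0 mult.assoc)
  then show ?thesis unfolding al1_def by (simp add: algebra_simps flip: fps_const_add)
qed

lemma Bf_sq: "Bf v z ^ 2 = al2 v - 2 * fps_const z * fps_X"
proof -
  have "Bf v z ^ 2 = 1 + 2 * fps_X * fps_const (v - z) + fps_sqrt (d2 v)"
    unfolding Bf_def by (rule fps_sqrt_sq) (simp add: d2_0 mult.assoc)
  then show ?thesis unfolding al2_def by (simp add: algebra_simps flip: fps_const_sub fps_const_neg)
qed

lemma d1_0': "d1 v $ 0 \<noteq> 0" by (simp add: d1_0)
lemma d2_0': "d2 v $ 0 \<noteq> 0" by (simp add: d2_0)

lemma k1:
  assumes "x * z = 1"
  shows "(al1 v - 2 * fps_const z * fps_X) * (al1 v - 2 * fps_const x * fps_X) =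
     2 * al1 v * (1 - (fps_const x + fps_const z) * fps_X - 2 * fps_const v * fps_X)"
proof -
  have s: "fps_sqrt (d1 v) ^ 2 = (1 - 2 * fps_const v * fps_X) ^ 2 - 4 * fps_X ^ 2"
    using fps_sqrt_sq[OF d1_0'] d1_eq by simp
  have xz: "fps_const x * fps_const z = (1 :: complex fps)" using assms by simp
  show ?thesis
    using key_alg[OF s xz, of "al1 v"] by (simp add: al1_def mult_ac)
qed

lemma k2:
  assumes "x * z = 1"
  shows "(al2 v - 2 * fps_const z * fps_X) * (al2 v - 2 * fps_const x * fps_X) =
     2 * al2 v * (1 - (fps_const x + fps_const z) * fps_X - 2 * fps_const (-v) * fps_X)"
proof -
  have s: "fps_sqrt (d2 v) ^ 2 = (1 - 2 * fps_const (-v) * fps_X) ^ 2 - 4 * fps_X ^ 2"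
    using fps_sqrt_sq[OF d2_0'] d2_eq by simp
  have xz: "fps_const x * fps_const z = (1 :: complex fps)" using assms by simp
  show ?thesis
    using key_alg[OF s xz, of "al2 v"] by (simp add: al2_def mult_ac)
qed

lemma big_alg:
  fixes Az Ax Bz Bx A0 B0 a1 a2 D h Z x X V :: "'a::comm_ring_1"
  assumes "Az^2 = a1 - 2*Z*X" "Ax^2 = a1 - 2*x*X" "Bz^2 = a2 - 2*Z*X" "Bx^2 = a2 - 2*x*X"
    "A0^2 = a1" "B0^2 = a2"
    "(a1 - 2*Z*X)*(a1 - 2*x*X) = 2*a1*(1 - (x+Z)*X - 2*V*X)"
    "(a2 - 2*Z*X)*(a2 - 2*x*X) = 2*a2*(1 - (x+Z)*X - 2*(-V)*X)"
    "D^2 * ((1 - (x+Z)*X)^2 - 4*V^2*X^2) = 1"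
    "4*h^2 = 1"
  shows "(h*(Az*Bz) * (h*(Ax*Bx)) * D)^2 = (h*(A0*B0))^2"
proof -
  have "(h*(Az*Bz) * (h*(Ax*Bx)) * D)^2 = h^4 * ((Az^2 * Ax^2) * (Bz^2 * Bx^2)) * D^2"
    by (simp add: power_mult_distrib algebra_simps power4_eq_xxxx power2_eq_square)
  also have "\<dots> = h^4 * ((2*a1*(1 - (x+Z)*X - 2*V*X)) * (2*a2*(1 - (x+Z)*X - 2*(-V)*X))) * D^2"
    using assms(1-4,7,8) by simp
  also have "\<dots> = (4*h^2) * (h^2 * a1 * a2) * (D^2 * ((1 - (x+Z)*X)^2 - 4*V^2*X^2))"
    by (simp add: algebra_simps power4_eq_xxxx power2_eq_square)
  also have "\<dots> = h^2 * a1 * a2" using assms(9,10) by simp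
  also have "\<dots> = (h*(A0*B0))^2" using assms(5,6) by (simp add: power_mult_distrib)
  finally show ?thesis .
qed

lemma Cf_identity:
  assumes x: "x \<noteq> 0"
  shows "Cf v (1/x) * Cf v x * Dt (x + 1/x) v = Cf v 0"
proof (rule sq_eq_fps)
  let ?z = "1/x"
  have xz: "x * ?z = 1" using x by simp
  have D: "Dt (x + 1/x) v ^ 2 * ((1 - (fps_const x + fps_const ?z) * fps_X)^2 - 4 * fps_const v ^ 2 * fps_X^2) = 1"
    using Dt_sq[of "x + 1/x" v] by (simp add: fps_const_add numeral_fps_const)
  have h: "4 * fps_const (1/2) ^ 2 = (1 :: complex fps)"
    by (simp add: numeral_fps_const power2_eq_square)
  have A0: "Af v 0 ^ 2 = al1 v" using Af_sq[of v 0] by simp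
  have B0: "Bf v 0 ^ 2 = al2 v" using Bf_sq[of v 0] by simp
  have kk2: "(al2 v - 2 * fps_const ?z * fps_X) * (al2 v - 2 * fps_const x * fps_X) =
     2 * al2 v * (1 - (fps_const x + fps_const ?z) * fps_X - 2 * (- fps_const v) * fps_X)"
    using k2[OF xz, of v] by (simp add: fps_const_neg)
  show "(Cf v (1/x) * Cf v x * Dt (x + 1/x) v) ^ 2 = Cf v 0 ^ 2"
    unfolding Cf_def
    by (rule big_alg[OF Af_sq Af_sq Bf_sq Bf_sq A0 B0 k1[OF xz] kk2 D h])
  show "(Cf v (1/x) * Cf v x * Dt (x + 1/x) v) $ 0 = Cf v 0 $ 0"
    by (simp add: Cf_0 Dt_0)
  show "(Cf v (1/x) * Cf v x * Dt (x + 1/x) v) $ 0 \<noteq> 0"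
    by (simp add: Cf_0 Dt_0)
qed


definition cp :: "complex \<Rightarrow> nat \<Rightarrow> complex poly" where
  "cp v a = (SOME p. degree p \<le> a \<and> (\<forall>z. Cf v z $ a = poly p z))"

definition cc :: "complex \<Rightarrow> nat \<Rightarrow> nat \<Rightarrow> complex" where
  "cc v a k = coeff (cp v a) k"

lemma cp_prop: "degree (cp v a) \<le> a \<and> (\<forall>z. Cf v z $ a = poly (cp v a) z)"
proof -
  have "\<exists>p. degree p \<le> a \<and> (\<forall>z. Cf v z $ a = poly p z)"
    using pz_Cf[of a v] by (simp add: pz_def)
  then show ?thesis unfolding cp_def by (rule someI_ex)
qed

lemma poly_sum_le:
  fixes p :: "complex poly"
  assumes "degree p \<le> a"
  shows "poly p z = (\<Sum>k\<le>a. coeff p k * z ^ k)"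
proof -
  have "poly p z = (\<Sum>k\<le>degree p. coeff p k * z ^ k)" by (rule poly_altdef)
  also have "\<dots> = (\<Sum>k\<le>a. coeff p k * z ^ k)"
    by (rule sum_supp_eq) (use assms in \<open>auto intro: le_degree\<close>)
  finally show ?thesis .
qed

lemma Cf_sum: "Cf v z $ a = (\<Sum>k\<le>a. cc v a k * z ^ k)"
  using cp_prop[of v a] poly_sum_le[of "cp v a" a z] by (simp add: cc_def)

lemma Cf_sum_x:
  assumes "x \<noteq> 0"
  shows "Cf v (1/x) $ a = (\<Sum>k\<le>a. cc v a k * x powi (- int k))"
  unfolding Cf_sum using assms by (simp add: power_int_minus power_one_over divide_inverse power_inverse)

definition g :: "complex \<Rightarrow> nat \<Rightarrow> int \<times> int \<Rightarrow> complex" where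
  "g v n q = (\<Sum>a\<le>n. \<Sum>k\<le>a. cc v a k * pm v (n - a) (fst q + int k, snd q))"

lemma g_supp:
  assumes "g v n (i,j) \<noteq> 0"
  shows "\<bar>i\<bar> \<le> int n \<and> \<bar>j\<bar> \<le> int n"
proof -
  have "(\<Sum>a\<le>n. \<Sum>k\<le>a. cc v a k * pm v (n - a) (i + int k, j)) \<noteq> 0"
    using assms by (simp add: g_def)
  then obtain a where a: "a \<in> {..n}" "(\<Sum>k\<le>a. cc v a k * pm v (n - a) (i + int k, j)) \<noteq> 0"
    by (rule sum.not_neutral_contains_not_neutral)
  obtain k where k: "k \<in> {..a}" "cc v a k * pm v (n - a) (i + int k, j) \<noteq> 0"
    using a(2) by (rule sum.not_neutral_contains_not_neutral)
  then have k: "k \<le> a" "pm v (n - a) (i + int k, j) \<noteq> 0" by auto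
  then show ?thesis using pm_supp[OF k(2)] a(1) by auto
qed

lemma cc00: "cc v 0 0 = 1"
  using Cf_sum[of v 0 0] Cf_0[of v 0] by simp

lemma g_0: "g v 0 q = (if q = (0,0) then 1 else 0)"
  by (cases q) (simp add: g_def cc00 pm_0)

lemma g_Suc:
  assumes "(i,j) \<notin> slit"
  shows "g v (Suc n) (i,j) = g v n (i-1,j) + g v n (i+1,j) + v * g v n (i,j-1) + v * g v n (i,j+1)"
proof -
  have last: "(\<Sum>k\<le>Suc n. cc v (Suc n) k * pm v (Suc n - Suc n) (i + int k, j)) = 0"
  proof (rule sum.neutral, intro ballI)
    fix k
    have "(i + int k, j) \<noteq> (0,0)"
    proof
      assume "(i + int k, j) = (0,0)"
      then have "(i,j) \<in> slit" by (auto simp: slit_def)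
      then show False using assms by simp
    qed
    then show "cc v (Suc n) k * pm v (Suc n - Suc n) (i + int k, j) = 0" by (auto simp: pm_0)
  qed
  have "g v (Suc n) (i,j) = (\<Sum>a\<le>n. \<Sum>k\<le>a. cc v a k * pm v (Suc n - a) (i + int k, j))"
    unfolding g_def using last by simp
  also have "\<dots> = (\<Sum>a\<le>n. \<Sum>k\<le>a. cc v a k * (pm v (n - a) (i + int k - 1, j) + pm v (n - a) (i + int k + 1, j)
      + v * pm v (n - a) (i + int k, j - 1) + v * pm v (n - a) (i + int k, j + 1)))"
    by (intro sum.cong refl) (simp add: Suc_diff_le pm_rec)
  also have "\<dots> = g v n (i-1,j) + g v n (i+1,j) + v * g v n (i,j-1) + v * g v n (i,j+1)"
    unfolding g_def by (simp add: sum.distrib sum_distrib_left algebra_simps)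
  finally show ?thesis .
qed

lemma pm_row:
  assumes x: "x \<noteq> 0"
  shows "(\<Sum>i\<in>{-int m..int m}. pm v m (i,0) * x powi i) = Dt (x + 1/x) v $ m"
proof -
  have "(\<Sum>i\<in>{-int m..int m}. pm v m (i,0) * x powi i) =
      (\<Sum>l\<le>m. of_nat (m choose l) * v ^ l * bx l 0 * (\<Sum>i\<in>{-int m..int m}. bx (m - l) i * x powi i))"
    unfolding pm_def by (simp add: sum_distrib_left sum_distrib_right sum.swap[of _ "{-int m..int m}"] mult_ac)
  also have "\<dots> = (\<Sum>l\<le>m. of_nat (m choose l) * v ^ l * bx l 0 * (x + 1/x) ^ (m - l))"
  proof (rule sum.cong[OF refl])
    fix l assume l: "l \<in> {..m}"
    have "(\<Sum>i\<in>{-int m..int m}. bx (m - l) i * x powi i) = (\<Sum>i\<in>{-int (m-l)..int (m-l)}. bx (m - l) i * x powi i)"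
      by (rule sum_supp_eq) (use l bx_supp[of "m-l"] in \<open>force+\<close>)
    then show "of_nat (m choose l) * v ^ l * bx l 0 * (\<Sum>i\<in>{-int m..int m}. bx (m - l) i * x powi i) =
        of_nat (m choose l) * v ^ l * bx l 0 * (x + 1/x) ^ (m - l)"
      using bx_sum[OF x] by simp
  qed
  also have "\<dots> = Dt (x + 1/x) v $ m" by (simp add: Dt_nth)
  finally show ?thesis .
qed

lemma g_row:
  assumes x: "x \<noteq> 0"
  shows "(\<Sum>i\<in>{-int n..int n}. g v n (i,0) * x powi i) = (Cf v (1/x) * Dt (x + 1/x) v) $ n"
proof -
  have "(\<Sum>i\<in>{-int n..int n}. g v n (i,0) * x powi i) =
     (\<Sum>a\<le>n. \<Sum>k\<le>a. cc v a k * (\<Sum>i\<in>{-int n..int n}. pm v (n - a) (i + int k, 0) * x powi i))"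
    unfolding g_def by (simp add: sum_distrib_left sum_distrib_right sum.swap[of _ "{-int n..int n}"] mult_ac)
  also have "\<dots> = (\<Sum>a\<le>n. \<Sum>k\<le>a. cc v a k * (x powi (- int k) * Dt (x + 1/x) v $ (n - a)))"
  proof (intro sum.cong refl)
    fix a k assume a: "a \<in> {..n}" and k: "k \<in> {..a}"
    have "(\<Sum>i\<in>{-int n..int n}. pm v (n - a) (i + int k, 0) * x powi i) =
        x powi (- int k) * (\<Sum>i\<in>{-int (n-a)..int (n-a)}. pm v (n - a) (i, 0) * x powi i)"
      by (rule shift_sum[of "\<lambda>i. pm v (n - a) (i, 0)"]) (use a k x in \<open>auto dest: pm_supp simp: of_nat_diff\<close>)
    then show "cc v a k * (\<Sum>i\<in>{-int n..int n}. pm v (n - a) (i + int k, 0) * x powi i) =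
        cc v a k * (x powi (- int k) * Dt (x + 1/x) v $ (n - a))"
      using pm_row[OF x] by simp
  qed
  also have "\<dots> = (\<Sum>a\<le>n. Cf v (1/x) $ a * Dt (x + 1/x) v $ (n - a))"
    unfolding Cf_sum_x[OF x] by (rule sum.cong[OF refl]) (simp add: sum_distrib_left sum_distrib_right mult_ac)
  also have "\<dots> = (Cf v (1/x) * Dt (x + 1/x) v) $ n"
    by (simp add: fps_mult_nth atLeast0AtMost)
  finally show ?thesis .
qed

lemma g_H:
  assumes n: "1 \<le> n" and i: "i \<le> 0"
  shows "g v n (i,0) = 0"
proof (cases "i < - int n")
  case True then show ?thesis using g_supp[of v n i 0] by fastforce
next
  case False
  let ?E = "\<lambda>x. Cf v 0 * inverse (Cf v x)"
  have pzE: "pz m (\<lambda>x. ?E x $ m)" for m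
    by (rule fam_mult) (auto intro: pz_const fam_inverse pz_Cf Cf_0)
  obtain p where p: "degree p \<le> n" "\<And>x. ?E x $ n = poly p x"
    using pzE[of n] unfolding pz_def by blast
  have E0: "?E 0 = 1" by (simp add: Cf_0 inverse_mult_eq_1')
  have "coeff p 0 = 0" using p(2)[of 0] E0 n by (simp add: poly_0_coeff_0)
  define e where "e i = (if 0 \<le> i then coeff p (nat i) else 0)" for i
  have esum: "(\<Sum>i\<in>{-int n..int n}. e i * x powi i) = poly p x" for x
  proof -
    have "(\<Sum>i\<in>{-int n..int n}. e i * x powi i) = (\<Sum>i\<in>{0..int n}. e i * x powi i)"
      by (rule sum_supp_eq) (use p(1) in \<open>auto simp: e_def split: if_splits dest!: le_degree\<close>)
    also have "\<dots> = (\<Sum>k\<le>n. coeff p k * x ^ k)"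
      by (rule sum.reindex_bij_witness[of _ "\<lambda>k. int k" "\<lambda>i. nat i"]) (auto simp: e_def power_int_def)
    also have "\<dots> = poly p x" using poly_sum_le[OF p(1)] by simp
    finally show ?thesis .
  qed
  have zero: "(\<Sum>i\<in>{-int n..int n}. (g v n (i,0) - e i) * x powi i) = 0" if x: "x \<noteq> 0" for x
  proof -
    have cz: "Cf v (1/x) * Dt (x + 1/x) v = ?E x"
    proof -
      have inv: "Cf v x * inverse (Cf v x) = 1" by (simp add: Cf_0 inverse_mult_eq_1')
      have "Cf v (1/x) * Dt (x + 1/x) v = Cf v (1/x) * Dt (x + 1/x) v * (Cf v x * inverse (Cf v x))"
        by (simp add: inv)
      also have "\<dots> = (Cf v (1/x) * Cf v x * Dt (x + 1/x) v) * inverse (Cf v x)"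
        by (simp add: mult_ac)
      also have "\<dots> = ?E x" by (simp add: Cf_identity[OF x])
      finally show ?thesis .
    qed
    have "(\<Sum>i\<in>{-int n..int n}. (g v n (i,0) - e i) * x powi i) =
        (\<Sum>i\<in>{-int n..int n}. g v n (i,0) * x powi i) - (\<Sum>i\<in>{-int n..int n}. e i * x powi i)"
      by (simp add: sum_subtractf algebra_simps)
    also have "\<dots> = 0" using g_row[OF x, where n=n and v=v] esum[of x] cz p(2)[of x] by simp
    finally show ?thesis .
  qed
  have "g v n (i,0) - e i = 0"
    by (rule laurent_zero[where a = "\<lambda>i. g v n (i,0) - e i" and N = n]) (use zero False i in auto)
  moreover have "e i = 0" using i \<open>coeff p 0 = 0\<close> by (auto simp: e_def)
  ultimately show ?thesis by simp
qed

lemma fw_eq_g: "fw v n q = g v n q"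
proof (induction n arbitrary: q)
  case 0 then show ?case by (simp add: fw_0 g_0)
next
  case (Suc n)
  obtain i j where q: "q = (i,j)" by (cases q)
  show ?case
  proof (cases "(i,j) \<in> slit")
    case True
    then have "j = 0" "i \<le> 0" by (auto simp: slit_def)
    then show ?thesis using True q g_H[where n="Suc n" and i=i and v=v] by (simp add: fw_Suc)
  next
    case False
    then show ?thesis using q Suc.IH g_Suc[OF False] by (simp add: fw_Suc)
  qed
qed


lemma shift2:
  assumes x: "x \<noteq> 0" and le: "m + k \<le> N"
  shows "(\<Sum>(i,j)\<in>{-int N..int N}\<times>{-int N..int N}. pm v m (i + int k, j) * x powi i * y powi j) =
    x powi (- int k) * (\<Sum>(i,j)\<in>{-int m..int m}\<times>{-int m..int m}. pm v m (i, j) * x powi i * y powi j)"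
proof -
  let ?A = "{-int N..int N}" and ?B = "{-int m..int m}"
  have "(\<Sum>(i,j)\<in>?A\<times>?A. pm v m (i + int k, j) * x powi i * y powi j) =
      (\<Sum>i\<in>?A. \<Sum>j\<in>?A. pm v m (i + int k, j) * x powi i * y powi j)"
    by (simp add: sum.cartesian_product)
  also have "\<dots> = (\<Sum>j\<in>?A. y powi j * (\<Sum>i\<in>?A. pm v m (i + int k, j) * x powi i))"
    by (subst sum.swap) (simp add: sum_distrib_left mult_ac)
  also have "\<dots> = (\<Sum>j\<in>?A. y powi j * (x powi (- int k) * (\<Sum>i\<in>?B. pm v m (i, j) * x powi i)))"
  proof (rule sum.cong[OF refl])
    fix j
    have "(\<Sum>i\<in>?A. pm v m (i + int k, j) * x powi i) = x powi (- int k) * (\<Sum>i\<in>?B. pm v m (i, j) * x powi i)"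
      by (rule shift_sum[of "\<lambda>i. pm v m (i, j)"]) (use x le in \<open>auto dest: pm_supp\<close>)
    then show "y powi j * (\<Sum>i\<in>?A. pm v m (i + int k, j) * x powi i) = y powi j * (x powi (- int k) * (\<Sum>i\<in>?B. pm v m (i, j) * x powi i))"
      by simp
  qed
  also have "\<dots> = (\<Sum>j\<in>?B. y powi j * (x powi (- int k) * (\<Sum>i\<in>?B. pm v m (i, j) * x powi i)))"
  proof (rule sum_supp_eq)
    fix j assume "y powi j * (x powi (- int k) * (\<Sum>i\<in>?B. pm v m (i, j) * x powi i)) \<noteq> 0"
    then have "(\<Sum>i\<in>?B. pm v m (i, j) * x powi i) \<noteq> 0" by auto
    then obtain i where "i \<in> ?B" "pm v m (i, j) * x powi i \<noteq> 0"
      by (rule sum.not_neutral_contains_not_neutral)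
    then have "\<bar>j\<bar> \<le> int m" using pm_supp[of v m i j] by auto
    then show "j \<in> ?A \<inter> ?B" using le by auto
  qed auto
  also have "\<dots> = x powi (- int k) * (\<Sum>i\<in>?B. \<Sum>j\<in>?B. pm v m (i, j) * x powi i * y powi j)"
    by (subst sum.swap) (simp add: sum_distrib_left mult_ac)
  also have "\<dots> = x powi (- int k) * (\<Sum>(i,j)\<in>?B\<times>?B. pm v m (i, j) * x powi i * y powi j)"
    by (simp add: sum.cartesian_product)
  finally show ?thesis .
qed

lemma g_full:
  assumes x: "x \<noteq> 0" and y: "y \<noteq> 0"
  shows "(\<Sum>(i,j)\<in>{-int n..int n}\<times>{-int n..int n}. g v n (i,j) * x powi i * y powi j) =
     (Cf v (1/x) * Qs (x + 1/x + v * (y + 1/y))) $ n"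
proof -
  let ?A = "{-int n..int n}\<times>{-int n..int n}"
  let ?K = "x + 1/x + v * (y + 1/y)"
  have "(\<Sum>(i,j)\<in>?A. g v n (i,j) * x powi i * y powi j) =
      (\<Sum>q\<in>?A. \<Sum>a\<le>n. \<Sum>k\<le>a. cc v a k * (pm v (n - a) (fst q + int k, snd q) * x powi fst q * y powi snd q))"
    unfolding g_def case_prod_unfold by (simp add: sum_distrib_left sum_distrib_right mult_ac)
  also have "\<dots> = (\<Sum>a\<le>n. \<Sum>k\<le>a. cc v a k * (\<Sum>q\<in>?A. pm v (n - a) (fst q + int k, snd q) * x powi fst q * y powi snd q))"
    by (simp add: sum.swap[of _ ?A] sum_distrib_left)
  also have "\<dots> = (\<Sum>a\<le>n. \<Sum>k\<le>a. cc v a k * (x powi (- int k) * ?K ^ (n - a)))"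
  proof (intro sum.cong refl)
    fix a k assume a: "a \<in> {..n}" and k: "k \<in> {..a}"
    have "(\<Sum>q\<in>?A. pm v (n - a) (fst q + int k, snd q) * x powi fst q * y powi snd q) =
        (\<Sum>(i,j)\<in>?A. pm v (n - a) (i + int k, j) * x powi i * y powi j)"
      by (simp add: case_prod_unfold)
    also have "\<dots> = x powi (- int k) * (\<Sum>(i,j)\<in>{-int (n-a)..int (n-a)}\<times>{-int (n-a)..int (n-a)}. pm v (n-a) (i, j) * x powi i * y powi j)"
      by (rule shift2) (use x a k in auto)
    also have "\<dots> = x powi (- int k) * ?K ^ (n - a)"
      using pm_sum[OF x y, where m="n - a" and v=v] by simp
    finally show "cc v a k * (\<Sum>q\<in>?A. pm v (n - a) (fst q + int k, snd q) * x powi fst q * y powi snd q) =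
        cc v a k * (x powi (- int k) * ?K ^ (n - a))" by simp
  qed
  also have "\<dots> = (\<Sum>a\<le>n. Cf v (1/x) $ a * Qs ?K $ (n - a))"
    unfolding Cf_sum_x[OF x] Qs_eq
    by (rule sum.cong[OF refl]) (simp add: sum_distrib_left sum_distrib_right mult_ac)
  also have "\<dots> = (Cf v (1/x) * Qs ?K) $ n"
    by (simp add: fps_mult_nth atLeast0AtMost)
  finally show ?thesis .
qed

theorem mainTheorem6:
  fixes x y v :: complex
  assumes "x \<noteq> 0" and "y \<noteq> 0"
  defines "t \<equiv> (fps_X :: complex fps)"
  defines "\<delta>1 \<equiv> (1 - 2 * t * fps_const (1 + v)) * (1 + 2 * t * fps_const (1 - v))"
  defines "\<delta>2 \<equiv> (1 - 2 * t * fps_const (1 - v)) * (1 + 2 * t * fps_const (1 + v))"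
  shows "S_gf x y v =
    fps_sqrt (1 - 2 * t * fps_const (v + 1 / x) + fps_sqrt \<delta>1) *
    fps_sqrt (1 + 2 * t * fps_const (v - 1 / x) + fps_sqrt \<delta>2) /
    (2 * (1 - t * fps_const (x + 1 / x + y * v + (1 / y) * v)))"
proof -
  let ?K = "x + 1/x + v * (y + 1/y)"
  have K: "x + 1 / x + y * v + (1 / y) * v = ?K" by (simp add: algebra_simps)
  have den: "(2 * (1 - t * fps_const ?K)) = fps_const 2 * (1 - fps_const ?K * fps_X)"
    by (simp add: t_def numeral_fps_const mult_ac)
  have "fps_sqrt (1 - 2 * t * fps_const (v + 1 / x) + fps_sqrt \<delta>1) *
    fps_sqrt (1 + 2 * t * fps_const (v - 1 / x) + fps_sqrt \<delta>2) /
    (2 * (1 - t * fps_const (x + 1 / x + y * v + (1 / y) * v)))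
    = Af v (1/x) * Bf v (1/x) / (fps_const 2 * (1 - fps_const ?K * fps_X))"
    unfolding K den by (simp add: Af_def Bf_def d1_def d2_def t_def \<delta>1_def \<delta>2_def)
  also have "\<dots> = Af v (1/x) * Bf v (1/x) * (fps_const (1/2) * Qs ?K)"
    by (simp add: fps_divide_unit fps_inverse_mult fps_const_inverse Qs_def)
  also have "\<dots> = Cf v (1/x) * Qs ?K"
    by (simp add: Cf_def mult_ac)
  finally have R: "fps_sqrt (1 - 2 * t * fps_const (v + 1 / x) + fps_sqrt \<delta>1) *
    fps_sqrt (1 + 2 * t * fps_const (v - 1 / x) + fps_sqrt \<delta>2) /
    (2 * (1 - t * fps_const (x + 1 / x + y * v + (1 / y) * v))) = Cf v (1/x) * Qs ?K" .
  show ?thesis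
    unfolding R
  proof (rule fps_ext)
    fix n
    have "S_gf x y v $ n = (\<Sum>(i,j)\<in>{-int n..int n}\<times>{-int n..int n}. fw v n (i,j) * x powi i * y powi j)"
      by (rule S_gf_fw)
    also have "\<dots> = (\<Sum>(i,j)\<in>{-int n..int n}\<times>{-int n..int n}. g v n (i,j) * x powi i * y powi j)"
      by (simp add: fw_eq_g)
    also have "\<dots> = (Cf v (1/x) * Qs ?K) $ n"
      by (rule g_full[OF assms(1,2)])
    finally show "S_gf x y v $ n = (Cf v (1/x) * Qs ?K) $ n" .
  qed
qed


end
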